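(* Let $T^2=\mathbb{R}^2/\mathbb{Z}^2$, $\alpha\in\mathbb{R}$, and $H:T^2\times\mathbb{R}\to T^2$ the flow $H(x,y,t)=(x+t,y+\alpha t)$. Let $\Delta$ be the partition of $T^2$ into orbits of $H$, $Y$ the space of orbits with the quotient topology, and $p:T^2\to Y$ the projection. Then $p$ has property (CONT), and $p$ has property (COMP) if and only if $\alpha$ is rational.
   Context: A $\Delta$-map is a continuous $h:T^2\to T^2$ mapping each element of $\Delta$ into some element of $\Delta$; $\mathrm{End}(T^2,\Delta)$ is the monoid of $\Delta$-maps, $\mathrm{End}(Y)=C(Y,Y)$, and $\psi(h)$ is the unique map with $p\circ h=\psi(h)\circ p$. Property (COMP): for every compact $L\subset Y$ there is a compact $K\subset T^2$ with $p(K)=L$. Property (CONT): $\psi:\mathrm{End}(T^2,\Delta)\to\mathrm{End}(Y)$ is continuous with respect to compact open topologies. *)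

theory Defs
  imports "HOL-Analysis.Analysis"
begin

definition qtop :: "'a topology \<Rightarrow> ('a \<Rightarrow> 'b) \<Rightarrow> 'b topology" where
  "qtop X p = topology (\<lambda>U. U \<subseteq> p ` topspace X \<and> openin X {x \<in> topspace X. p x \<in> U})"

lemma istopology_qtop:
  "istopology (\<lambda>U. U \<subseteq> p ` topspace X \<and> openin X {x \<in> topspace X. p x \<in> U})"
proof -
  have i: "{x \<in> topspace X. p x \<in> S \<inter> T} = {x \<in> topspace X. p x \<in> S} \<inter> {x \<in> topspace X. p x \<in> T}" for S T
    by auto
  have u: "{x \<in> topspace X. p x \<in> \<Union>K} = (\<Union>S\<in>K. {x \<in> topspace X. p x \<in> S})" for K
    by auto
  show ?thesis
    unfolding istopology_def i u by (auto intro!: openin_Int openin_Union)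
qed

lemma openin_qtop:
  "openin (qtop X p) U \<longleftrightarrow> U \<subseteq> p ` topspace X \<and> openin X {x \<in> topspace X. p x \<in> U}"
  unfolding qtop_def by (simp add: topology_inverse'[OF istopology_qtop])

text \<open>Compact-open topology on C(X,Y); maps are represented as extensional functions
  (undefined outside topspace X).\<close>
definition cmaps :: "'a topology \<Rightarrow> 'b topology \<Rightarrow> ('a \<Rightarrow> 'b) set" where
  "cmaps X Y = {f. continuous_map X Y f \<and> f \<in> extensional (topspace X)}"

definition compact_open :: "'a topology \<Rightarrow> 'b topology \<Rightarrow> ('a \<Rightarrow> 'b) topology" where
  "compact_open X Y = topology_generated_by
     {{f \<in> cmaps X Y. f ` K \<subseteq> U} | K U. compactin X K \<and> openin Y U}"

text \<open>The torus T^2 = R^2/Z^2, modelled (homeomorphically) as S^1 x S^1 in C x C,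
  via (x,y) |-> (exp(2 pi i x), exp(2 pi i y)).\<close>
definition torus :: "(complex \<times> complex) topology" where
  "torus = top_of_set (sphere 0 1 \<times> sphere 0 1)"

text \<open>The linear flow H(x,y,t) = (x+t, y+alpha t).\<close>
definition flowH :: "real \<Rightarrow> complex \<times> complex \<Rightarrow> real \<Rightarrow> complex \<times> complex" where
  "flowH \<alpha> q t = (fst q * cis (2 * pi * t), snd q * cis (2 * pi * \<alpha> * t))"

definition orbp :: "real \<Rightarrow> complex \<times> complex \<Rightarrow> (complex \<times> complex) set" where
  "orbp \<alpha> q = range (flowH \<alpha> q)"

definition Delta :: "real \<Rightarrow> (complex \<times> complex) set set" where
  "Delta \<alpha> = orbp \<alpha> ` topspace torus"

definition orbspace :: "real \<Rightarrow> (complex \<times> complex) set topology" where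
  "orbspace \<alpha> = qtop torus (orbp \<alpha>)"

definition EndDelta :: "real \<Rightarrow> (complex \<times> complex \<Rightarrow> complex \<times> complex) set" where
  "EndDelta \<alpha> = {h \<in> cmaps torus torus. \<forall>D\<in>Delta \<alpha>. \<exists>E\<in>Delta \<alpha>. h ` D \<subseteq> E}"

text \<open>psi(h): the map with p o h = psi(h) o p.\<close>
definition psi :: "real \<Rightarrow> (complex \<times> complex \<Rightarrow> complex \<times> complex)
    \<Rightarrow> (complex \<times> complex) set \<Rightarrow> (complex \<times> complex) set" where
  "psi \<alpha> h = restrict (\<lambda>D. orbp \<alpha> (h (SOME x. x \<in> D))) (topspace (orbspace \<alpha>))"

definition prop_COMP :: "real \<Rightarrow> bool" where
  "prop_COMP \<alpha> \<longleftrightarrow> (\<forall>L. compactin (orbspace \<alpha>) L \<longrightarrow>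
      (\<exists>K. compactin torus K \<and> orbp \<alpha> ` K = L))"

definition prop_CONT :: "real \<Rightarrow> bool" where
  "prop_CONT \<alpha> \<longleftrightarrow> continuous_map (subtopology (compact_open torus torus) (EndDelta \<alpha>))
      (compact_open (orbspace \<alpha>) (orbspace \<alpha>)) (psi \<alpha>)"

end

theory Submission
  imports Defs "HOL-Library.Real_Mod"
begin

lemma topspace_torus: "topspace torus = sphere 0 1 \<times> sphere 0 1"
  by (simp add: torus_def)

lemma flow_0[simp]: "flowH \<alpha> q 0 = q"
  by (simp add: flowH_def)

lemma flow_add: "flowH \<alpha> (flowH \<alpha> q s) t = flowH \<alpha> q (s + t)"
  by (simp add: flowH_def mult.assoc cis_mult distrib_left)

lemma flow_torus: "q \<in> topspace torus \<Longrightarrow> flowH \<alpha> q t \<in> topspace torus"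
  by (auto simp: topspace_torus flowH_def norm_mult)

lemma in_orbp: "x \<in> orbp \<alpha> x"
  unfolding orbp_def by (metis flow_0 rangeI)

lemma orbp_flow: "orbp \<alpha> (flowH \<alpha> q s) = orbp \<alpha> q"
proof -
  have "range (\<lambda>t. flowH \<alpha> q (s + t)) = range (flowH \<alpha> q)"
  proof (rule set_eqI, rule iffI)
    fix y assume "y \<in> range (flowH \<alpha> q)"
    then obtain u where "y = flowH \<alpha> q u" by auto
    then have "y = (\<lambda>t. flowH \<alpha> q (s + t)) (u - s)" by simp
    then show "y \<in> range (\<lambda>t. flowH \<alpha> q (s + t))" by blast
  qed auto
  then show ?thesis unfolding orbp_def by (simp add: flow_add)
qed

lemma orbp_eq: "y \<in> orbp \<alpha> x \<Longrightarrow> orbp \<alpha> y = orbp \<alpha> x"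
proof -
  assume "y \<in> orbp \<alpha> x"
  then obtain s where "y = flowH \<alpha> x s" by (auto simp: orbp_def)
  then show ?thesis by (simp add: orbp_flow)
qed

lemma orbp_eq_iff: "orbp \<alpha> x = orbp \<alpha> y \<longleftrightarrow> y \<in> orbp \<alpha> x"
  by (metis in_orbp orbp_eq)

lemma cont_flow: "continuous_on UNIV (\<lambda>p. flowH \<alpha> (fst p) (snd p))"
  unfolding flowH_def by (intro continuous_intros)

lemma cont_flow1: "continuous_on UNIV (flowH \<alpha> q)"
  unfolding flowH_def by (intro continuous_intros)

lemma openin_qtop_whole: "openin (qtop X p) (p ` topspace X)"
proof -
  have "{x \<in> topspace X. p x \<in> p ` topspace X} = topspace X" by auto
  then show ?thesis by (simp add: openin_qtop)
qed

lemma topspace_qtop: "topspace (qtop X p) = p ` topspace X"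
proof
  show "topspace (qtop X p) \<subseteq> p ` topspace X"
    using openin_qtop[THEN iffD1, OF openin_topspace[of "qtop X p"]] by (rule conjunct1)
  show "p ` topspace X \<subseteq> topspace (qtop X p)"
    by (rule openin_subset[OF openin_qtop_whole])
qed

lemma topspace_Y: "topspace (orbspace \<alpha>) = orbp \<alpha> ` topspace torus"
  by (simp add: orbspace_def topspace_qtop)

lemma openin_Y: "openin (orbspace \<alpha>) U \<longleftrightarrow> U \<subseteq> orbp \<alpha> ` topspace torus \<and>
   openin torus {x \<in> topspace torus. orbp \<alpha> x \<in> U}"
  by (simp add: orbspace_def openin_qtop)

lemma psi_orbp:
  assumes h: "h \<in> EndDelta \<alpha>" and x: "x \<in> topspace torus"
  shows "psi \<alpha> h (orbp \<alpha> x) = orbp \<alpha> (h x)"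
proof -
  have D: "orbp \<alpha> x \<in> Delta \<alpha>" using x by (simp add: Delta_def)
  have "\<forall>D\<in>Delta \<alpha>. \<exists>E\<in>Delta \<alpha>. h ` D \<subseteq> E" using h unfolding EndDelta_def by blast
  then obtain E where E: "E \<in> Delta \<alpha>" "h ` orbp \<alpha> x \<subseteq> E" using D by blast
  then obtain e where e: "E = orbp \<alpha> e" unfolding Delta_def by blast
  let ?s = "SOME y. y \<in> orbp \<alpha> x"
  have s: "?s \<in> orbp \<alpha> x" by (rule someI, rule in_orbp)
  have "h ?s \<in> orbp \<alpha> e" using E e s by blast
  then have 1: "orbp \<alpha> (h ?s) = orbp \<alpha> e" by (rule orbp_eq)
  have "h x \<in> orbp \<alpha> e" using E e in_orbp by blast
  then have "orbp \<alpha> (h x) = orbp \<alpha> e" by (rule orbp_eq)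
  note 1 this
  moreover have "orbp \<alpha> x \<in> topspace (orbspace \<alpha>)" using x by (simp add: topspace_Y)
  ultimately show ?thesis unfolding psi_def restrict_apply' by simp
qed

lemma EndDelta_cont: "h \<in> EndDelta \<alpha> \<Longrightarrow> continuous_map torus torus h"
  by (simp add: EndDelta_def cmaps_def)

lemma psi_cmaps:
  assumes h: "h \<in> EndDelta \<alpha>"
  shows "psi \<alpha> h \<in> cmaps (orbspace \<alpha>) (orbspace \<alpha>)"
proof -
  have hc: "continuous_map torus torus h" using EndDelta_cont h .
  have ht: "h x \<in> topspace torus" if "x \<in> topspace torus" for x
    using continuous_map_image_subset_topspace[OF hc] that by blast
  have "continuous_map (orbspace \<alpha>) (orbspace \<alpha>) (psi \<alpha> h)"
    unfolding continuous_map
  proof (intro conjI allI impI)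
    show "psi \<alpha> h ` topspace (orbspace \<alpha>) \<subseteq> topspace (orbspace \<alpha>)"
    proof
      fix D assume "D \<in> psi \<alpha> h ` topspace (orbspace \<alpha>)"
      then obtain x where x: "x \<in> topspace torus" "D = psi \<alpha> h (orbp \<alpha> x)"
        unfolding topspace_Y by blast
      then have "D = orbp \<alpha> (h x)" using psi_orbp[OF h] by simp
      then show "D \<in> topspace (orbspace \<alpha>)" unfolding topspace_Y using ht[OF x(1)] by blast
    qed
    fix U assume U: "openin (orbspace \<alpha>) U"
    let ?V = "{x \<in> topspace torus. orbp \<alpha> x \<in> U}"
    have V: "openin torus ?V" using U by (simp add: openin_Y)
    have eq: "{x \<in> topspace torus. orbp \<alpha> x \<in> {D \<in> topspace (orbspace \<alpha>). psi \<alpha> h D \<in> U}}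
        = {x \<in> topspace torus. h x \<in> ?V}"
    proof (rule set_eqI)
      fix x
      show "x \<in> {x \<in> topspace torus. orbp \<alpha> x \<in> {D \<in> topspace (orbspace \<alpha>). psi \<alpha> h D \<in> U}} \<longleftrightarrow>
         x \<in> {x \<in> topspace torus. h x \<in> ?V}"
      proof (cases "x \<in> topspace torus")
        case True
        then show ?thesis using ht[OF True] psi_orbp[OF h True] unfolding topspace_Y by auto
      qed auto
    qed
    have sub: "{D \<in> topspace (orbspace \<alpha>). psi \<alpha> h D \<in> U} \<subseteq> orbp \<alpha> ` topspace torus"
      unfolding topspace_Y by blast
    show "openin (orbspace \<alpha>) {D \<in> topspace (orbspace \<alpha>). psi \<alpha> h D \<in> U}"
      unfolding openin_Y eq using sub openin_continuous_map_preimage[OF hc V] by blast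
  qed
  then show ?thesis unfolding cmaps_def psi_def by simp
qed


lemma EndDelta_cmaps: "EndDelta \<alpha> \<subseteq> cmaps torus torus"
  unfolding EndDelta_def by blast

lemma topspace_CO: "topspace (compact_open X Y) = cmaps X Y"
proof -
  have "cmaps X Y \<in> {{f \<in> cmaps X Y. f ` K \<subseteq> U} | K U. compactin X K \<and> openin Y U}"
  proof -
    have "cmaps X Y = {f \<in> cmaps X Y. f ` {} \<subseteq> {}}" by simp
    then show ?thesis by (intro CollectI exI[of _ "{}"]) simp
  qed
  moreover have "\<Union>{{f \<in> cmaps X Y. f ` K \<subseteq> U} | K U. compactin X K \<and> openin Y U} \<subseteq> cmaps X Y"
    by blast
  ultimately show ?thesis unfolding compact_open_def topology_generated_by_topspace by blast
qed

lemma topspace_T1: "topspace (subtopology (compact_open torus torus) (EndDelta \<alpha>)) = EndDelta \<alpha>"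
  using EndDelta_cmaps by (auto simp: topspace_subtopology topspace_CO)

lemma CONT_gen:
  assumes key: "\<And>L W. compactin (orbspace \<alpha>) L \<Longrightarrow> openin (orbspace \<alpha>) W \<Longrightarrow> L \<noteq> {} \<Longrightarrow> W \<noteq> {}
     \<Longrightarrow> W \<noteq> topspace (orbspace \<alpha>) \<Longrightarrow> compactin torus {x \<in> topspace torus. orbp \<alpha> x \<in> L}"
  shows "prop_CONT \<alpha>"
proof -
  let ?Y = "orbspace \<alpha>"
  let ?T1 = "subtopology (compact_open torus torus) (EndDelta \<alpha>)"
  let ?S = "{{f \<in> cmaps ?Y ?Y. f ` K \<subseteq> U} | K U. compactin ?Y K \<and> openin ?Y U}"
  have b: "psi \<alpha> ` topspace ?T1 \<subseteq> \<Union>?S"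
  proof
    fix g assume "g \<in> psi \<alpha> ` topspace ?T1"
    then obtain h where h: "h \<in> EndDelta \<alpha>" "g = psi \<alpha> h" unfolding topspace_T1 by blast
    then have g1: "g \<in> {f \<in> cmaps ?Y ?Y. f ` {} \<subseteq> {}}" using psi_cmaps[OF h(1)] by simp
    have S1: "{f \<in> cmaps ?Y ?Y. f ` {} \<subseteq> {}} \<in> ?S"
      by (rule CollectI, rule exI[of _ "{}"], rule exI[of _ "{}"]) simp
    show "g \<in> \<Union>?S" by (rule UnionI[OF S1 g1])
  qed
  have a: "openin ?T1 (psi \<alpha> -` U \<inter> topspace ?T1)" if U: "U \<in> ?S" for U
  proof -
    obtain L W where LW: "U = {f \<in> cmaps ?Y ?Y. f ` L \<subseteq> W}" "compactin ?Y L" "openin ?Y W"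
      using U unfolding mem_Collect_eq by (elim exE conjE) blast
    have Lsub: "L \<subseteq> orbp \<alpha> ` topspace torus"
      using compactin_subset_topspace[OF LW(2)] unfolding topspace_Y .
    have maps: "psi \<alpha> h D \<in> topspace ?Y" if "h \<in> EndDelta \<alpha>" "D \<in> topspace ?Y" for h D
    proof -
      have "continuous_map ?Y ?Y (psi \<alpha> h)" using psi_cmaps[OF that(1)] unfolding cmaps_def by blast
      from continuous_map_image_subset_topspace[OF this] that(2) show ?thesis by blast
    qed
    have set: "psi \<alpha> -` U \<inter> topspace ?T1 = {h \<in> EndDelta \<alpha>. psi \<alpha> h ` L \<subseteq> W}"
    proof (rule set_eqI)
      fix h
      show "h \<in> psi \<alpha> -` U \<inter> topspace ?T1 \<longleftrightarrow> h \<in> {h \<in> EndDelta \<alpha>. psi \<alpha> h ` L \<subseteq> W}"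
        unfolding topspace_T1 LW(1) using psi_cmaps[of h \<alpha>] by blast
    qed
    consider "L = {} \<or> W = topspace ?Y" | "L \<noteq> {}" "W = {}" | "L \<noteq> {}" "W \<noteq> {}" "W \<noteq> topspace ?Y"
      by blast
    then show ?thesis
    proof cases
      case 1
      have eq1: "{h \<in> EndDelta \<alpha>. psi \<alpha> h ` L \<subseteq> W} = topspace ?T1"
      proof -
        have "psi \<alpha> h ` L \<subseteq> W" if "h \<in> EndDelta \<alpha>" for h
          using 1 maps[OF that] compactin_subset_topspace[OF LW(2)] by blast
        then show ?thesis unfolding topspace_T1 by blast
      qed
      show ?thesis unfolding set eq1 by (rule openin_topspace)
    next
      case 2
      then have eq2: "{h \<in> EndDelta \<alpha>. psi \<alpha> h ` L \<subseteq> W} = {}" by blast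
      show ?thesis unfolding set eq2 by (rule openin_empty)
    next
      case 3
      let ?P = "{x \<in> topspace torus. orbp \<alpha> x \<in> L}"
      let ?V = "{x \<in> topspace torus. orbp \<alpha> x \<in> W}"
      have P: "compactin torus ?P" using key[OF LW(2) LW(3) 3] .
      have V: "openin torus ?V" using LW(3) unfolding openin_Y by blast
      let ?O = "{f \<in> cmaps torus torus. f ` ?P \<subseteq> ?V}"
      have O: "openin (compact_open torus torus) ?O"
        unfolding compact_open_def
        by (rule topology_generated_by_Basis, rule CollectI, rule exI[of _ ?P], rule exI[of _ ?V])
           (intro conjI refl P V)
      have eq: "{h \<in> EndDelta \<alpha>. psi \<alpha> h ` L \<subseteq> W} = EndDelta \<alpha> \<inter> ?O"
      proof (rule set_eqI, rule iffI)
        fix h assume "h \<in> {h \<in> EndDelta \<alpha>. psi \<alpha> h ` L \<subseteq> W}"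
        then have h: "h \<in> EndDelta \<alpha>" and hL: "psi \<alpha> h ` L \<subseteq> W" by auto
        have ht: "h x \<in> topspace torus" if "x \<in> topspace torus" for x
          using continuous_map_image_subset_topspace[OF EndDelta_cont[OF h]] that by blast
        have "h ` ?P \<subseteq> ?V"
        proof
          fix y assume "y \<in> h ` ?P"
          then obtain x where x: "x \<in> topspace torus" "orbp \<alpha> x \<in> L" "y = h x" by blast
          have "orbp \<alpha> (h x) \<in> W" using hL x psi_orbp[OF h x(1)] by (metis image_eqI subsetD)
          then show "y \<in> ?V" using x ht by blast
        qed
        then show "h \<in> EndDelta \<alpha> \<inter> ?O" using h EndDelta_cmaps by blast
      next
        fix h assume "h \<in> EndDelta \<alpha> \<inter> ?O"
        then have h: "h \<in> EndDelta \<alpha>" and hP: "h ` ?P \<subseteq> ?V" by auto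
        have "psi \<alpha> h ` L \<subseteq> W"
        proof
          fix E assume "E \<in> psi \<alpha> h ` L"
          then obtain D where D: "D \<in> L" "E = psi \<alpha> h D" by blast
          then obtain x where x: "x \<in> topspace torus" "D = orbp \<alpha> x" using Lsub by blast
          have "x \<in> ?P" using x D by blast
          then have "h x \<in> ?V" using hP by blast
          then show "E \<in> W" using D x psi_orbp[OF h x(1)] by simp
        qed
        then show "h \<in> {h \<in> EndDelta \<alpha>. psi \<alpha> h ` L \<subseteq> W}" using h by blast
      qed
      show ?thesis unfolding set eq by (rule openin_subtopology_Int2[OF O])
    qed
  qed
  show ?thesis unfolding prop_CONT_def compact_open_def[of "orbspace \<alpha>"] continuous_on_generated_topo_iff
    using a b by blast
qed

lemma period:
  assumes "\<alpha> \<in> \<rat>"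
  obtains c where "c > 0" "\<And>q t k. flowH \<alpha> q (t + of_int k * c) = flowH \<alpha> q t"
proof -
  obtain a b where ab: "b > 0" "\<alpha> = of_int a / of_int b" using Rats_cases'[OF assms] by metis
  define c where "c = real_of_int b"
  have c: "c > 0" using ab by (simp add: c_def)
  have "flowH \<alpha> q (t + of_int k * c) = flowH \<alpha> q t" for q t k
  proof -
    have e1: "2 * pi * (t + of_int k * c) = 2 * pi * t + 2 * pi * of_int (k * b)"
      by (simp add: c_def algebra_simps)
    have "\<alpha> * c = of_int a" using ab c by (simp add: c_def)
    then have e2: "2 * pi * \<alpha> * (t + of_int k * c) = 2 * pi * \<alpha> * t + 2 * pi * of_int (k * a)"
      by (simp add: algebra_simps)
    have z1: "cis (2 * pi * of_int (k * b)) = 1" by (rule cis_multiple_2pi) simp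
    have z2: "cis (2 * pi * of_int (k * a)) = 1" by (rule cis_multiple_2pi) simp
    show ?thesis unfolding flowH_def e1 e2 cis_mult[symmetric] z1 z2 by simp
  qed
  then show ?thesis using c that by blast
qed

lemma period_reduce:
  assumes c: "c > 0" and per: "\<And>q t k. flowH \<alpha> q (t + of_int k * c) = flowH \<alpha> q t"
  shows "\<exists>r\<in>{0..c}. flowH \<alpha> q s = flowH \<alpha> q r"
proof -
  define k where "k = \<lfloor>s / c\<rfloor>"
  define r where "r = s - of_int k * c"
  have "of_int k \<le> s / c" "s / c < of_int k + 1" unfolding k_def by linarith+
  then have "of_int k * c \<le> s" "s < (of_int k + 1) * c" using c by (simp_all add: field_simps)
  then have r: "r \<in> {0..c}" unfolding r_def by (auto simp: algebra_simps)
  have "flowH \<alpha> q s = flowH \<alpha> q (r + of_int k * c)" unfolding r_def by simp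
  also have "\<dots> = flowH \<alpha> q r" by (rule per)
  finally show ?thesis using r by blast
qed

lemma compactin_torus: "compactin torus K \<longleftrightarrow> compact K \<and> K \<subseteq> topspace torus"
  unfolding torus_def by (simp add: compactin_subtopology)

lemma orbit_compact:
  assumes c: "c > 0" and per: "\<And>q t k. flowH \<alpha> q (t + of_int k * c) = flowH \<alpha> q t"
    and q: "q \<in> topspace torus"
  shows "compactin torus (orbp \<alpha> q)"
proof -
  have eq: "orbp \<alpha> q = flowH \<alpha> q ` {0..c}"
  proof
    show "orbp \<alpha> q \<subseteq> flowH \<alpha> q ` {0..c}"
    proof
      fix y assume "y \<in> orbp \<alpha> q"
      then obtain s where s: "y = flowH \<alpha> q s" unfolding orbp_def by blast
      obtain r where "r \<in> {0..c}" "flowH \<alpha> q s = flowH \<alpha> q r" using period_reduce[OF c per] by blast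
      then show "y \<in> flowH \<alpha> q ` {0..c}" using s by blast
    qed
    show "flowH \<alpha> q ` {0..c} \<subseteq> orbp \<alpha> q" unfolding orbp_def by blast
  qed
  have "compact (flowH \<alpha> q ` {0..c})"
    by (rule compact_continuous_image[OF continuous_on_subset[OF cont_flow1]]) auto
  moreover have "flowH \<alpha> q ` {0..c} \<subseteq> topspace torus" using flow_torus[OF q] by blast
  ultimately show ?thesis unfolding compactin_torus eq by blast
qed

lemma P_compact:
  assumes c: "c > 0" and per: "\<And>q t k. flowH \<alpha> q (t + of_int k * c) = flowH \<alpha> q t"
    and L: "compactin (orbspace \<alpha>) L"
  shows "compactin torus {x \<in> topspace torus. orbp \<alpha> x \<in> L}"
proof -
  let ?P = "{x \<in> topspace torus. orbp \<alpha> x \<in> L}"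
  have Lsub: "L \<subseteq> orbp \<alpha> ` topspace torus"
    using compactin_subset_topspace[OF L] unfolding topspace_Y .
  have main: "\<exists>\<F>. finite \<F> \<and> \<F> \<subseteq> \<U> \<and> ?P \<subseteq> \<Union>\<F>"
    if U: "\<forall>U\<in>\<U>. openin torus U" "?P \<subseteq> \<Union>\<U>" for \<U>
  proof -
    have orbsub: "orbp \<alpha> q \<subseteq> ?P" if "q \<in> ?P" for q
    proof
      fix y assume y: "y \<in> orbp \<alpha> q"
      then obtain s where "y = flowH \<alpha> q s" unfolding orbp_def by blast
      then have "y \<in> topspace torus" using flow_torus that by blast
      moreover have "orbp \<alpha> y = orbp \<alpha> q" using orbp_eq[OF y] .
      ultimately show "y \<in> ?P" using that by simp
    qed
    have ex: "\<forall>q\<in>?P. \<exists>\<F>. finite \<F> \<and> \<F> \<subseteq> \<U> \<and> orbp \<alpha> q \<subseteq> \<Union>\<F>"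
    proof
      fix q assume q: "q \<in> ?P"
      have cq: "compactin torus (orbp \<alpha> q)" using orbit_compact[OF c per] q by blast
      have cov: "(\<forall>U\<in>\<U>. openin torus U) \<and> orbp \<alpha> q \<subseteq> \<Union>\<U>" using U orbsub[OF q] by blast
      show "\<exists>\<F>. finite \<F> \<and> \<F> \<subseteq> \<U> \<and> orbp \<alpha> q \<subseteq> \<Union>\<F>"
        using compactin_def[THEN iffD1, OF cq, THEN conjunct2, rule_format, OF cov] .
    qed
    obtain F where F0: "\<forall>q\<in>?P. finite (F q) \<and> F q \<subseteq> \<U> \<and> orbp \<alpha> q \<subseteq> \<Union>(F q)"
      using bchoice[OF ex] by blast
    have F: "finite (F q) \<and> F q \<subseteq> \<U> \<and> orbp \<alpha> q \<subseteq> \<Union>(F q)" if "q \<in> ?P" for q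
      using F0 that by blast
    define V where "V q = {y \<in> topspace torus. \<forall>t\<in>{0..c}. flowH \<alpha> y t \<in> \<Union>(F q)}" for q
    have Vall: "flowH \<alpha> y s \<in> \<Union>(F q)" if "y \<in> V q" for y q s
    proof -
      obtain r where "r \<in> {0..c}" "flowH \<alpha> y s = flowH \<alpha> y r" using period_reduce[OF c per] by blast
      then show ?thesis using that unfolding V_def by simp
    qed
    have Vsat: "z \<in> V q" if "y \<in> V q" "z \<in> topspace torus" "orbp \<alpha> z = orbp \<alpha> y" for y z q
    proof -
      have "z \<in> orbp \<alpha> y" using that(3) in_orbp by metis
      then obtain s where s: "z = flowH \<alpha> y s" unfolding orbp_def by blast
      have "flowH \<alpha> z t \<in> \<Union>(F q)" for t unfolding s flow_add by (rule Vall[OF that(1)])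
      then show ?thesis unfolding V_def using that(2) by blast
    qed
    have Vq: "q \<in> V q" if q: "q \<in> ?P" for q
    proof -
      have "flowH \<alpha> q t \<in> \<Union>(F q)" for t
      proof -
        have "flowH \<alpha> q t \<in> orbp \<alpha> q" unfolding orbp_def by blast
        then show ?thesis using F[OF q] by blast
      qed
      then show ?thesis unfolding V_def using q by blast
    qed
    have Vopen: "openin torus (V q)" if q: "q \<in> ?P" for q
    proof -
      have "openin torus (\<Union>(F q))" using F[OF q] U(1) by blast
      then obtain W' where W': "open W'" "\<Union>(F q) = topspace torus \<inter> W'"
        unfolding torus_def openin_open by auto
      let ?G = "(\<lambda>p. flowH \<alpha> (fst p) (snd p)) -` W'"
      have G: "open ?G"
      proof (rule continuous_open_vimage[OF W'(1)])
        fix x :: "(complex \<times> complex) \<times> real"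
        show "continuous (at x) (\<lambda>p. flowH \<alpha> (fst p) (snd p))"
          using cont_flow[of \<alpha>] continuous_on_eq_continuous_at[OF open_UNIV] by blast
      qed
      show ?thesis unfolding openin_subopen[of torus "V q"]
      proof
        fix y assume y: "y \<in> V q"
        have yG: "{y} \<times> {0..c} \<subseteq> ?G" using y W'(2) unfolding V_def by auto
        obtain X0 where X0: "y \<in> X0" "open X0" "X0 \<times> {0..c} \<subseteq> ?G"
          using Elementary_Topology.tube_lemma[OF compact_Icc G yG] by blast
        have "topspace torus \<inter> X0 \<subseteq> V q"
        proof
          fix z assume z: "z \<in> topspace torus \<inter> X0"
          have "flowH \<alpha> z t \<in> \<Union>(F q)" if "t \<in> {0..c}" for t
          proof -
            have "(z, t) \<in> ?G" using X0(3) z that by blast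
            then show ?thesis using W'(2) flow_torus z by auto
          qed
          then show "z \<in> V q" using z unfolding V_def by blast
        qed
        moreover have "openin torus (topspace torus \<inter> X0)"
          using openin_open_Int[OF X0(2), of "sphere 0 1 \<times> sphere 0 1"] unfolding torus_def by simp
        moreover have "y \<in> topspace torus \<inter> X0" using y X0(1) unfolding V_def by blast
        ultimately show "\<exists>T. openin torus T \<and> y \<in> T \<and> T \<subseteq> V q" by blast
      qed
    qed
    have Oopen: "openin (orbspace \<alpha>) (orbp \<alpha> ` V q)" if q: "q \<in> ?P" for q
    proof -
      have "{x \<in> topspace torus. orbp \<alpha> x \<in> orbp \<alpha> ` V q} = V q"
      proof (rule set_eqI, rule iffI)
        fix x assume "x \<in> {x \<in> topspace torus. orbp \<alpha> x \<in> orbp \<alpha> ` V q}"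
        then obtain y where "x \<in> topspace torus" "y \<in> V q" "orbp \<alpha> x = orbp \<alpha> y" by blast
        then show "x \<in> V q" using Vsat by blast
      next
        fix x assume "x \<in> V q"
        then have xV: "x \<in> V q" .
        have "x \<in> topspace torus" using xV unfolding V_def by blast
        moreover have "orbp \<alpha> x \<in> orbp \<alpha> ` V q" using xV by (rule imageI)
        ultimately show "x \<in> {x \<in> topspace torus. orbp \<alpha> x \<in> orbp \<alpha> ` V q}" by simp
      qed
      moreover have "orbp \<alpha> ` V q \<subseteq> orbp \<alpha> ` topspace torus" unfolding V_def by blast
      ultimately show ?thesis unfolding openin_Y using Vopen[OF q] by simp
    qed
    have Lcov: "L \<subseteq> \<Union>((\<lambda>q. orbp \<alpha> ` V q) ` ?P)"
    proof
      fix D assume D: "D \<in> L"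
      then obtain x where x: "x \<in> topspace torus" "D = orbp \<alpha> x" using Lsub by blast
      then have xP: "x \<in> ?P" using D by blast
      have "D \<in> orbp \<alpha> ` V x" unfolding x(2) by (rule imageI[OF Vq[OF xP]])
      then show "D \<in> \<Union>((\<lambda>q. orbp \<alpha> ` V q) ` ?P)" by (rule UN_I[OF xP])
    qed
    have opens: "\<forall>Ob\<in>(\<lambda>q. orbp \<alpha> ` V q) ` ?P. openin (orbspace \<alpha>) Ob"
    proof
      fix Ob assume "Ob \<in> (\<lambda>q. orbp \<alpha> ` V q) ` ?P"
      then obtain q where q: "q \<in> ?P" "Ob = orbp \<alpha> ` V q" by (rule imageE) blast
      show "openin (orbspace \<alpha>) Ob" unfolding q(2) by (rule Oopen[OF q(1)])
    qed
    have cL: "\<And>\<U>'. (\<forall>U\<in>\<U>'. openin (orbspace \<alpha>) U) \<and> L \<subseteq> \<Union>\<U>'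
          \<Longrightarrow> (\<exists>\<F>. finite \<F> \<and> \<F> \<subseteq> \<U>' \<and> L \<subseteq> \<Union>\<F>)"
      using compactin_def[THEN iffD1, OF L, THEN conjunct2, rule_format] .
    obtain \<G> where G: "finite \<G>" "\<G> \<subseteq> (\<lambda>q. orbp \<alpha> ` V q) ` ?P" "L \<subseteq> \<Union>\<G>"
      using cL[OF conjI[OF opens Lcov]] by blast
    then obtain Q where Q: "Q \<subseteq> ?P" "finite Q" "\<G> = (\<lambda>q. orbp \<alpha> ` V q) ` Q"
      using finite_subset_image[OF G(1) G(2)] by blast
    let ?F = "\<Union>(F ` Q)"
    have "finite ?F"
    proof (rule finite_Union)
      show "finite (F ` Q)" using Q(2) by blast
      show "\<And>M. M \<in> F ` Q \<Longrightarrow> finite M" using Q(1) F by blast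
    qed
    moreover have "?F \<subseteq> \<U>"
    proof
      fix U0 assume "U0 \<in> ?F"
      then obtain q where q: "q \<in> Q" "U0 \<in> F q" by (rule UnionE) (erule imageE, blast)
      have "q \<in> ?P" using Q(1) q(1) by (rule subsetD)
      then have "F q \<subseteq> \<U>" using F by blast
      then show "U0 \<in> \<U>" using q(2) by (rule subsetD)
    qed
    moreover have "?P \<subseteq> \<Union>?F"
    proof
      fix x assume xP: "x \<in> ?P"
      then have "orbp \<alpha> x \<in> \<Union>\<G>" using G(3) by blast
      then obtain q where q: "q \<in> Q" "orbp \<alpha> x \<in> orbp \<alpha> ` V q" unfolding Q(3) by (rule UN_E)
      then obtain y where y: "y \<in> V q" "orbp \<alpha> x = orbp \<alpha> y" by (elim imageE) simp
      have xt: "x \<in> topspace torus" using xP by simp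
      have "x \<in> V q" by (rule Vsat[OF y(1) xt y(2)])
      then have "flowH \<alpha> x 0 \<in> \<Union>(F q)" by (rule Vall)
      then obtain U0 where U0: "U0 \<in> F q" "x \<in> U0" by auto
      have "U0 \<in> ?F" using q(1) U0(1) by (rule UN_I)
      then show "x \<in> \<Union>?F" by (rule UnionI[OF _ U0(2)])
    qed
    ultimately show ?thesis by blast
  qed
  show ?thesis unfolding compactin_def
  proof (intro conjI allI impI)
    show "?P \<subseteq> topspace torus" by blast
    fix \<U> assume "(\<forall>U\<in>\<U>. openin torus U) \<and> ?P \<subseteq> \<Union>\<U>"
    then show "\<exists>\<F>. finite \<F> \<and> \<F> \<subseteq> \<U> \<and> ?P \<subseteq> \<Union>\<F>" using main by blast
  qed
qed

lemma COMP_rat: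
  assumes "\<alpha> \<in> \<rat>" shows "prop_COMP \<alpha>"
proof -
  obtain c where c: "c > 0" "\<And>q t k. flowH \<alpha> q (t + of_int k * c) = flowH \<alpha> q t"
    using period[OF assms] by blast
  show ?thesis unfolding prop_COMP_def
  proof (intro allI impI)
    fix L assume L: "compactin (orbspace \<alpha>) L"
    have Lsub: "L \<subseteq> orbp \<alpha> ` topspace torus"
      using compactin_subset_topspace[OF L] unfolding topspace_Y .
    have "orbp \<alpha> ` {x \<in> topspace torus. orbp \<alpha> x \<in> L} = L" using Lsub by blast
    then show "\<exists>K. compactin torus K \<and> orbp \<alpha> ` K = L" using P_compact[OF c L] by blast
  qed
qed

lemma CONT_rat:
  assumes "\<alpha> \<in> \<rat>" shows "prop_CONT \<alpha>"
proof -
  obtain c where c: "c > 0" "\<And>q t k. flowH \<alpha> q (t + of_int k * c) = flowH \<alpha> q t"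
    using period[OF assms] by blast
  show ?thesis by (rule CONT_gen, rule P_compact[OF c])
qed


lemma unit_cis: "norm z = 1 \<Longrightarrow> cis (Arg z) = z"
proof -
  assume z: "norm z = 1"
  then have "z \<noteq> 0" by auto
  then have "cis (Arg z) = sgn z" by (rule cis_Arg)
  also have "\<dots> = z" using z by (simp add: sgn_eq)
  finally show ?thesis .
qed

lemma isCont_cis': "isCont cis x"
  unfolding cis_conv_exp by (intro continuous_intros)

lemma dense_orbit:
  assumes irr: "\<alpha> \<notin> \<rat>" and q: "q \<in> topspace torus" and V: "openin torus V" "r \<in> V"
  shows "\<exists>t. flowH \<alpha> q t \<in> V"
proof -
  have Vo: "\<forall>x\<in>V. \<exists>e>0. \<forall>x'\<in>sphere 0 1 \<times> sphere 0 1. dist x' x < e \<longrightarrow> x' \<in> V"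
    using V(1) unfolding torus_def openin_euclidean_subtopology_iff by blast
  obtain e where e: "e > 0" "\<And>x'. x' \<in> topspace torus \<Longrightarrow> dist x' r < e \<Longrightarrow> x' \<in> V"
    using Vo V(2) unfolding topspace_torus by blast
  have rt: "r \<in> topspace torus" using openin_subset[OF V(1)] V(2) by blast
  obtain z w where qzw: "q = (z, w)" by fastforce
  obtain z' w' where rzw: "r = (z', w')" by fastforce
  have nz: "norm z = 1" "norm w = 1" using q qzw unfolding topspace_torus by auto
  have nz': "norm z' = 1" "norm w' = 1" using rt rzw unfolding topspace_torus by auto
  define a where "a = Arg z"
  define b where "b = Arg w"
  define a' where "a' = Arg z'"
  define b' where "b' = Arg w'"
  have za: "z = cis a" "w = cis b" "z' = cis a'" "w' = cis b'"
    unfolding a_def b_def a'_def b'_def using unit_cis nz nz' by auto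
  define t0 where "t0 = (a' - a) / (2 * pi)"
  obtain d where d: "d > 0" "\<And>x. dist x b' < d \<Longrightarrow> dist (cis x) (cis b') < e"
    using isCont_cis'[of b'] e(1) unfolding continuous_at_eps_delta by blast
  define \<beta> where "\<beta> = (b' - b - 2 * pi * \<alpha> * t0) / (2 * pi)"
  have dpos: "d / (2 * pi) > 0" using d(1) by simp
  obtain h k where hk: "\<bar>of_int k * \<alpha> - of_int h - \<beta>\<bar> < d / (2 * pi)"
    using sequence_of_fractional_parts_is_dense[OF irr dpos, of \<beta>] by metis
  define t where "t = t0 + of_int k"
  define x where "x = b' + 2 * pi * (of_int k * \<alpha> - of_int h - \<beta>)"
  have e1: "a + 2 * pi * t = a' + 2 * pi * of_int k"
    unfolding t_def t0_def by (simp add: field_simps)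
  have e2: "b + 2 * pi * \<alpha> * t = x + 2 * pi * of_int h"
    unfolding t_def x_def \<beta>_def by (simp add: field_simps)
  have f1: "z * cis (2 * pi * t) = z'"
  proof -
    have "z * cis (2 * pi * t) = cis (a + 2 * pi * t)" unfolding za by (simp add: cis_mult)
    also have "\<dots> = cis a' * cis (2 * pi * of_int k)" unfolding e1 by (simp only: cis_mult)
    also have "\<dots> = z'" using za by simp
    finally show ?thesis .
  qed
  have f2: "w * cis (2 * pi * \<alpha> * t) = cis x"
  proof -
    have "w * cis (2 * pi * \<alpha> * t) = cis (b + 2 * pi * \<alpha> * t)" unfolding za by (simp add: cis_mult)
    also have "\<dots> = cis x * cis (2 * pi * of_int h)" unfolding e2 by (simp only: cis_mult)
    also have "\<dots> = cis x" by simp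
    finally show ?thesis .
  qed
  have ft: "flowH \<alpha> q t = (z', cis x)" unfolding flowH_def qzw using f1 f2 by simp
  have "\<bar>x - b'\<bar> = 2 * pi * \<bar>of_int k * \<alpha> - of_int h - \<beta>\<bar>" unfolding x_def by (simp add: abs_mult)
  also have "\<dots> < 2 * pi * (d / (2 * pi))" using hk by (intro mult_strict_left_mono) auto
  also have "\<dots> = d" by simp
  finally have "dist x b' < d" by (simp add: dist_real_def)
  then have "dist (cis x) w' < e" using d(2) za by simp
  then have "dist (flowH \<alpha> q t) r < e" unfolding ft rzw by (simp add: dist_Pair_Pair)
  moreover have "flowH \<alpha> q t \<in> topspace torus" by (rule flow_torus[OF q])
  ultimately show ?thesis using e(2) by blast
qed

lemma indiscrete:
  assumes irr: "\<alpha> \<notin> \<rat>" and U: "openin (orbspace \<alpha>) U" "U \<noteq> {}"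
  shows "U = topspace (orbspace \<alpha>)"
proof
  show "U \<subseteq> topspace (orbspace \<alpha>)" by (rule openin_subset[OF U(1)])
  let ?V = "{x \<in> topspace torus. orbp \<alpha> x \<in> U}"
  have V: "openin torus ?V" "U \<subseteq> orbp \<alpha> ` topspace torus" using U(1) unfolding openin_Y by blast+
  obtain D where "D \<in> U" using U(2) by blast
  then obtain r where r: "r \<in> topspace torus" "orbp \<alpha> r \<in> U" using V(2) by blast
  then have rV: "r \<in> ?V" by blast
  show "topspace (orbspace \<alpha>) \<subseteq> U"
  proof
    fix D assume "D \<in> topspace (orbspace \<alpha>)"
    then obtain q where q: "q \<in> topspace torus" "D = orbp \<alpha> q" unfolding topspace_Y by blast
    obtain t where "flowH \<alpha> q t \<in> ?V" using dense_orbit[OF irr q(1) V(1) rV] by blast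
    then have "orbp \<alpha> (flowH \<alpha> q t) \<in> U" by blast
    then show "D \<in> U" unfolding q(2) orbp_flow .
  qed
qed

lemma all_compact:
  assumes irr: "\<alpha> \<notin> \<rat>" and L: "L \<subseteq> topspace (orbspace \<alpha>)"
  shows "compactin (orbspace \<alpha>) L"
  unfolding compactin_def
proof (intro conjI allI impI)
  show "L \<subseteq> topspace (orbspace \<alpha>)" by (rule L)
  fix \<U> assume U: "(\<forall>U\<in>\<U>. openin (orbspace \<alpha>) U) \<and> L \<subseteq> \<Union>\<U>"
  show "\<exists>\<F>. finite \<F> \<and> \<F> \<subseteq> \<U> \<and> L \<subseteq> \<Union>\<F>"
  proof (cases "L = {}")
    case True
    then show ?thesis by (intro exI[of _ "{}"]) simp
  next
    case False
    then obtain D where "D \<in> L" by blast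
    then obtain U0 where U0: "U0 \<in> \<U>" "D \<in> U0" using U by blast
    then have "U0 = topspace (orbspace \<alpha>)" using indiscrete[OF irr] U by blast
    then have "L \<subseteq> \<Union>{U0}" using L by simp
    then show ?thesis using U0(1) by (intro exI[of _ "{U0}"]) simp
  qed
qed

lemma CONT_irr:
  assumes irr: "\<alpha> \<notin> \<rat>" shows "prop_CONT \<alpha>"
proof (rule CONT_gen)
  fix L W assume "openin (orbspace \<alpha>) W" "W \<noteq> {}" "W \<noteq> topspace (orbspace \<alpha>)"
  then show "compactin torus {x \<in> topspace torus. orbp \<alpha> x \<in> L}" using indiscrete[OF irr] by blast
qed

lemma closedin_torus: "compact S \<Longrightarrow> S \<subseteq> topspace torus \<Longrightarrow> closedin torus S"
  unfolding torus_def by (simp add: closed_subset compact_imp_closed)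

lemma q1_notin:
  assumes irr: "\<alpha> \<notin> \<rat>"
  shows "(1, cis (pi * \<alpha>)) \<notin> orbp \<alpha> (1, 1)"
proof
  assume "(1, cis (pi * \<alpha>)) \<in> orbp \<alpha> (1, 1)"
  then obtain t where t: "(1, cis (pi * \<alpha>)) = flowH \<alpha> (1, 1) t" unfolding orbp_def by blast
  then have "cis (2 * pi * t) = 1" unfolding flowH_def by simp
  then obtain n where n: "2 * pi * t = of_int n * (2 * pi)" unfolding cis_eq_1_iff by blast
  then have tn: "t = of_int n" by simp
  have "cis (2 * pi * \<alpha> * t) = cis (pi * \<alpha>)" using t unfolding flowH_def by simp
  then have "cis (2 * pi * \<alpha> * t) / cis (pi * \<alpha>) = 1" by simp
  then have "cis (2 * pi * \<alpha> * t - pi * \<alpha>) = 1" by (simp add: cis_divide)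
  then obtain m where m: "2 * pi * \<alpha> * t - pi * \<alpha> = of_int m * (2 * pi)" unfolding cis_eq_1_iff by blast
  then have "pi * (\<alpha> * (2 * of_int n - 1)) = pi * (2 * of_int m)" unfolding tn by (simp add: algebra_simps)
  then have eq: "\<alpha> * (2 * of_int n - 1) = 2 * of_int m" by simp
  have nz: "(2 * of_int n - 1 :: real) \<noteq> 0"
  proof
    assume "(2 * of_int n - 1 :: real) = 0"
    then have "of_int (2 * n - 1) = (0::real)" by simp
    then have "2 * n - 1 = 0" by linarith
    then show False by presburger
  qed
  have "\<alpha> = (2 * of_int m) / (2 * of_int n - 1)" using eq nz by (simp add: field_simps)
  also have "\<dots> = of_int (2 * m) / of_int (2 * n - 1)" by simp
  also have "\<dots> \<in> \<rat>" by (intro Rats_divide Rats_of_int)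
  finally show False using irr by blast
qed

lemma not_COMP:
  assumes irr: "\<alpha> \<notin> \<rat>" shows "\<not> prop_COMP \<alpha>"
proof
  assume C: "prop_COMP \<alpha>"
  define q0 :: "complex \<times> complex" where "q0 = (1, 1)"
  define q1 :: "complex \<times> complex" where "q1 = (1, cis (pi * \<alpha>))"
  have q0t: "q0 \<in> topspace torus" unfolding q0_def topspace_torus by simp
  have q1t: "q1 \<in> topspace torus" unfolding q1_def topspace_torus by simp
  have q1n: "q1 \<notin> orbp \<alpha> q0" unfolding q0_def q1_def by (rule q1_notin[OF irr])
  let ?L = "topspace (orbspace \<alpha>) - {orbp \<alpha> q0}"
  have "compactin (orbspace \<alpha>) ?L" by (rule all_compact[OF irr]) blast
  then obtain K where K: "compactin torus K" "orbp \<alpha> ` K = ?L" using C unfolding prop_COMP_def by blast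
  have Kc: "compact K" "K \<subseteq> topspace torus" using K(1) unfolding compactin_torus by auto
  define T where "T n = (\<lambda>p. flowH \<alpha> (fst p) (snd p)) ` (K \<times> {- real n..real n})" for n :: nat
  define A where "A m = flowH \<alpha> q0 ` {- real m..real m}" for m :: nat
  define \<G> where "\<G> = range T \<union> range A"
  have Tc: "compact (T n)" for n
    unfolding T_def
    by (rule compact_continuous_image[OF continuous_on_subset[OF cont_flow]]) (auto intro: compact_Times Kc compact_Icc)
  have Ts: "T n \<subseteq> topspace torus" for n
    unfolding T_def using Kc(2) flow_torus by auto
  have Ac: "compact (A m)" for m
    unfolding A_def by (rule compact_continuous_image[OF continuous_on_subset[OF cont_flow1]]) auto
  have As: "A m \<subseteq> topspace torus" for m
    unfolding A_def using flow_torus[OF q0t] by blast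
  have Tint: "torus interior_of (T n) = {}" for n
    unfolding interior_of_eq_empty
  proof (intro allI impI)
    fix T' assume T': "openin torus T' \<and> T' \<subseteq> T n"
    show "T' = {}"
    proof (rule ccontr)
      assume "T' \<noteq> {}"
      then obtain r where "r \<in> T'" by blast
      then obtain t where "flowH \<alpha> q0 t \<in> T'" using dense_orbit[OF irr q0t] T' by blast
      then have "flowH \<alpha> q0 t \<in> T n" using T' by blast
      then obtain k s where ks: "k \<in> K" "flowH \<alpha> q0 t = flowH \<alpha> k s" unfolding T_def by auto
      have "orbp \<alpha> q0 = orbp \<alpha> k" using ks(2) orbp_flow by metis
      moreover have "orbp \<alpha> k \<in> ?L" using K(2) ks(1) by blast
      ultimately show False by simp
    qed
  qed
  have Aint: "torus interior_of (A m) = {}" for m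
    unfolding interior_of_eq_empty
  proof (intro allI impI)
    fix T' assume T': "openin torus T' \<and> T' \<subseteq> A m"
    show "T' = {}"
    proof (rule ccontr)
      assume "T' \<noteq> {}"
      then obtain r where "r \<in> T'" by blast
      then obtain t where "flowH \<alpha> q1 t \<in> T'" using dense_orbit[OF irr q1t] T' by blast
      then have "flowH \<alpha> q1 t \<in> A m" using T' by blast
      then obtain s where s: "flowH \<alpha> q1 t = flowH \<alpha> q0 s" unfolding A_def by auto
      have "orbp \<alpha> q1 = orbp \<alpha> q0" using s orbp_flow by metis
      then have "q1 \<in> orbp \<alpha> q0" using in_orbp by metis
      then show False using q1n by blast
    qed
  qed
  have "torus interior_of \<Union>\<G> = {}"
  proof (rule Baire_category_alt)
    show "completely_metrizable_space torus \<or> locally_compact_space torus \<and> regular_space torus"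
      unfolding torus_def
      by (intro disjI1 completely_metrizable_space_closedin completely_metrizable_space_euclidean)
         (simp add: closed_Times)
    show "countable \<G>" unfolding \<G>_def by simp
    fix S assume "S \<in> \<G>"
    then consider n where "S = T n" | m where "S = A m" unfolding \<G>_def by blast
    then show "closedin torus S \<and> torus interior_of S = {}"
    proof cases
      case 1 then show ?thesis using closedin_torus[OF Tc Ts] Tint by simp
    next
      case 2 then show ?thesis using closedin_torus[OF Ac As] Aint by simp
    qed
  qed
  moreover have "topspace torus \<subseteq> \<Union>\<G>"
  proof
    fix x assume x: "x \<in> topspace torus"
    show "x \<in> \<Union>\<G>"
    proof (cases "orbp \<alpha> x = orbp \<alpha> q0")
      case True
      then have "x \<in> orbp \<alpha> q0" using in_orbp by metis
      then obtain s where s: "x = flowH \<alpha> q0 s" unfolding orbp_def by blast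
      define m where "m = nat \<lceil>\<bar>s\<bar>\<rceil>"
      have "s \<in> {- real m..real m}" unfolding m_def by (auto, linarith+)
      then have "x \<in> A m" unfolding A_def s by blast
      then show ?thesis unfolding \<G>_def by blast
    next
      case False
      then have "orbp \<alpha> x \<in> ?L" using x unfolding topspace_Y by blast
      then obtain k where k: "k \<in> K" "orbp \<alpha> x = orbp \<alpha> k" using K(2) by (metis imageE)
      then have "x \<in> orbp \<alpha> k" using in_orbp by metis
      then obtain s where s: "x = flowH \<alpha> k s" unfolding orbp_def by blast
      define n where "n = nat \<lceil>\<bar>s\<bar>\<rceil>"
      have "s \<in> {- real n..real n}" unfolding n_def by (auto, linarith+)
      then have "(k, s) \<in> K \<times> {- real n..real n}" using k(1) by blast
      then have "x \<in> T n" unfolding T_def s by force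
      then show ?thesis unfolding \<G>_def by blast
    qed
  qed
  ultimately have "topspace torus = {}"
    by (metis interior_of_topspace interior_of_mono subset_empty)
  then show False using q0t by blast
qed

theorem mainTheorem12:
  fixes \<alpha> :: real
  shows "prop_CONT \<alpha> \<and> (prop_COMP \<alpha> \<longleftrightarrow> \<alpha> \<in> \<rat>)"
proof (cases "\<alpha> \<in> \<rat>")
  case True
  then show ?thesis using CONT_rat COMP_rat by blast
next
  case False
  then show ?thesis using CONT_irr not_COMP by blast
qed
end
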